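(* Let $K\subset\mathbb{R}^n$ be a convex body with $w(K)=r(K)+R(K)$, let $C_K$ be a Scott-completion of $K$, and for $\lambda\in[0,1]$ let $K_\lambda:=\lambda K+(1-\lambda)C_K$. Then for all $\lambda\in[0,1]$, \[ f(K_\lambda)=\lambda f(K)+(1-\lambda)f(C_K), \] and consequently $w(K_\lambda)=r(K_\lambda)+R(K_\lambda)$.
   Context: A convex body is a compact convex subset of $\mathbb{R}^n$ (here with $R(K)>0$ so the quotients are defined). $r$ = inradius (radius of a largest ball contained in the body), $w$ = width (smallest distance between two distinct parallel supporting hyperplanes), $D$ = diameter, $R$ = circumradius (radius of the smallest enclosing ball). Minkowski sum $A+B=\{a+b\}$, $\lambda A=\{\lambda a\}$. A Scott-completion of $K$ is a convex body $C_K\supseteq K$ with $D(K)=D(C_K)=w(C_K)$ and $R(C_K)=R(K)$. The map $f$ is $f(K)=\left(\frac{r(K)}{R(K)},\frac{w(K)}{2R(K)},\frac{D(K)}{2R(K)}\right)\in[0,1]^3$. *)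

theory Defs
  imports "HOL-Analysis.Analysis"
begin

definition convex_body :: "'a::euclidean_space set \<Rightarrow> bool" where
  "convex_body K \<longleftrightarrow> compact K \<and> convex K \<and> K \<noteq> {}"

definition inradius :: "'a::euclidean_space set \<Rightarrow> real" where
  "inradius K = Sup {\<rho>. \<rho> \<ge> 0 \<and> (\<exists>x. cball x \<rho> \<subseteq> K)}"

definition circumradius :: "'a::euclidean_space set \<Rightarrow> real" where
  "circumradius K = Inf {\<rho>. \<rho> \<ge> 0 \<and> (\<exists>x. K \<subseteq> cball x \<rho>)}"

definition width :: "'a::euclidean_space set \<Rightarrow> real" where
  "width K = Inf {(SUP x\<in>K. u \<bullet> x) - (INF x\<in>K. u \<bullet> x) | u. norm u = 1}"

definition mink_comb :: "real \<Rightarrow> 'a::euclidean_space set \<Rightarrow> 'a set \<Rightarrow> 'a set" where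
  "mink_comb t A B = {t *\<^sub>R a + (1 - t) *\<^sub>R b | a b. a \<in> A \<and> b \<in> B}"

definition scott_completion :: "'a::euclidean_space set \<Rightarrow> 'a set \<Rightarrow> bool" where
  "scott_completion K C \<longleftrightarrow> convex_body C \<and> K \<subseteq> C \<and>
     diameter K = diameter C \<and> diameter C = width C \<and> circumradius C = circumradius K"

definition fmap :: "'a::euclidean_space set \<Rightarrow> real \<times> real \<times> real" where
  "fmap K = (inradius K / circumradius K, width K / (2 * circumradius K),
             diameter K / (2 * circumradius K))"

end

theory Submission
  imports Defs
begin


lemma hs_upper:
  fixes A :: "'a::euclidean_space set"
  assumes "compact A" "y \<in> A" shows "u \<bullet> y \<le> (SUP x\<in>A. u \<bullet> x)"
proof -
  have "compact ((\<lambda>x. u \<bullet> x) ` A)" using assms(1) by (intro compact_continuous_image continuous_intros)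
  hence "bdd_above ((\<lambda>x. u \<bullet> x) ` A)" by (simp add: bounded_imp_bdd_above compact_imp_bounded)
  thus ?thesis using assms(2) by (rule cSUP_upper2) simp
qed

lemma hi_lower:
  fixes A :: "'a::euclidean_space set"
  assumes "compact A" "y \<in> A" shows "(INF x\<in>A. u \<bullet> x) \<le> u \<bullet> y"
proof -
  have "compact ((\<lambda>x. u \<bullet> x) ` A)" using assms(1) by (intro compact_continuous_image continuous_intros)
  hence "bdd_below ((\<lambda>x. u \<bullet> x) ` A)" by (simp add: bounded_imp_bdd_below compact_imp_bounded)
  thus ?thesis using assms(2) by (rule cINF_lower2) simp
qed

lemma hs_att:
  fixes A :: "'a::euclidean_space set"
  assumes "compact A" "A \<noteq> {}" shows "\<exists>a\<in>A. (SUP x\<in>A. u \<bullet> x) = u \<bullet> a"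
proof -
  have "compact ((\<lambda>x. u \<bullet> x) ` A)" using assms(1) by (intro compact_continuous_image continuous_intros)
  then obtain s where s: "s \<in> (\<lambda>x. u \<bullet> x) ` A" "\<forall>t\<in>(\<lambda>x. u \<bullet> x) ` A. t \<le> s"
    using compact_attains_sup[of "(\<lambda>x. u \<bullet> x) ` A"] assms(2) by auto
  then obtain a where a: "a \<in> A" "s = u \<bullet> a" by auto
  have "(SUP x\<in>A. u \<bullet> x) = s" by (rule cSup_eq_maximum) (use s in auto)
  thus ?thesis using a by auto
qed

lemma hi_att:
  fixes A :: "'a::euclidean_space set"
  assumes "compact A" "A \<noteq> {}" shows "\<exists>a\<in>A. (INF x\<in>A. u \<bullet> x) = u \<bullet> a"
proof -
  have "compact ((\<lambda>x. u \<bullet> x) ` A)" using assms(1) by (intro compact_continuous_image continuous_intros)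
  then obtain s where s: "s \<in> (\<lambda>x. u \<bullet> x) ` A" "\<forall>t\<in>(\<lambda>x. u \<bullet> x) ` A. s \<le> t"
    using compact_attains_inf[of "(\<lambda>x. u \<bullet> x) ` A"] assms(2) by auto
  then obtain a where a: "a \<in> A" "s = u \<bullet> a" by auto
  have "(INF x\<in>A. u \<bullet> x) = s" by (rule cInf_eq_minimum) (use s in auto)
  thus ?thesis using a by auto
qed

lemma hs_least:
  fixes A :: "'a::euclidean_space set"
  assumes "A \<noteq> {}" "\<And>y. y \<in> A \<Longrightarrow> u \<bullet> y \<le> M" shows "(SUP x\<in>A. u \<bullet> x) \<le> M"
  using assms by (intro cSUP_least) auto

lemma hi_greatest:
  fixes A :: "'a::euclidean_space set"
  assumes "A \<noteq> {}" "\<And>y. y \<in> A \<Longrightarrow> M \<le> u \<bullet> y" shows "M \<le> (INF x\<in>A. u \<bullet> x)"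
  using assms by (intro cINF_greatest) auto

lemma ball_crit:
  fixes A :: "'a::euclidean_space set"
  assumes "compact A" "convex A" "A \<noteq> {}"
    and H: "\<And>u. norm u = 1 \<Longrightarrow> u \<bullet> x + \<rho> \<le> (SUP y\<in>A. u \<bullet> y)"
  shows "cball x \<rho> \<subseteq> A"
proof
  fix p assume p: "p \<in> cball x \<rho>"
  show "p \<in> A"
  proof (rule ccontr)
    assume "p \<notin> A"
    then obtain a b where ab: "a \<bullet> p < b" "\<forall>y\<in>A. a \<bullet> y > b"
      using separating_hyperplane_closed_point[of A p] assms compact_imp_closed by blast
    have a0: "a \<noteq> 0" using ab assms(3) by force
    define u where "u = - (1 / norm a) *\<^sub>R a"
    have nu: "norm u = 1" using a0 by (simp add: u_def)
    obtain y where y: "y \<in> A" "(SUP y\<in>A. u \<bullet> y) = u \<bullet> y" using hs_att[OF assms(1,3)] by blast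
    have "a \<bullet> y > a \<bullet> p" using ab y by force
    hence "u \<bullet> y < u \<bullet> p" using a0 by (simp add: u_def divide_simps)
    moreover have "u \<bullet> (p - x) \<le> \<rho>"
    proof -
      have "u \<bullet> (p - x) \<le> norm u * norm (p - x)" by (rule norm_cauchy_schwarz)
      also have "\<dots> \<le> \<rho>" using p nu by (simp add: dist_norm norm_minus_commute)
      finally show ?thesis .
    qed
    ultimately have "u \<bullet> y < u \<bullet> x + \<rho>" by (simp add: inner_diff_right)
    with H[OF nu] y show False by simp
  qed
qed



lemma unit_ex: "\<exists>e::'a::euclidean_space. norm e = 1"
  using norm_Basis[OF SOME_Basis] by blast

lemma in_le:
  fixes A :: "'a::euclidean_space set"
  assumes "compact A" "cball x \<rho> \<subseteq> A" "\<rho> \<ge> 0" shows "\<rho> \<le> inradius A"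
proof -
  have bd: "\<rho>' \<le> diameter A" if "\<rho>' \<ge> 0" "cball y \<rho>' \<subseteq> A" for \<rho>' y
  proof -
    obtain e :: 'a where e: "norm e = 1" using unit_ex by blast
    have "y \<in> A" "y + \<rho>' *\<^sub>R e \<in> A" using that e by (auto simp: dist_norm)
    hence "dist y (y + \<rho>' *\<^sub>R e) \<le> diameter A"
      using diameter_bounded_bound compact_imp_bounded assms(1) by blast
    thus ?thesis using e that by (simp add: dist_norm)
  qed
  show ?thesis unfolding inradius_def
    by (rule cSup_upper) (use assms bd in \<open>auto intro!: bdd_aboveI[where M="diameter A"]\<close>)
qed

lemma in_ge0:
  fixes A :: "'a::euclidean_space set"
  assumes "compact A" "A \<noteq> {}" shows "0 \<le> inradius A"
proof -
  obtain a where "a \<in> A" using assms by auto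
  hence "cball a 0 \<subseteq> A" by simp
  thus ?thesis using in_le[OF assms(1), of a 0] by auto
qed

lemma in_least:
  fixes A :: "'a::euclidean_space set"
  assumes "A \<noteq> {}" "\<And>x \<rho>. \<rho> \<ge> 0 \<Longrightarrow> cball x \<rho> \<subseteq> A \<Longrightarrow> \<rho> \<le> M" shows "inradius A \<le> M"
proof -
  obtain a where "a \<in> A" using assms by auto
  hence "0 \<in> {\<rho>. \<rho> \<ge> 0 \<and> (\<exists>x. cball x \<rho> \<subseteq> A)}" by auto
  hence ne: "{\<rho>. \<rho> \<ge> 0 \<and> (\<exists>x. cball x \<rho> \<subseteq> A)} \<noteq> {}" by blast
  show ?thesis unfolding inradius_def by (rule cSup_least[OF ne]) (use assms in auto)
qed

lemma circ_le:
  fixes A :: "'a::euclidean_space set"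
  assumes "A \<subseteq> cball x \<rho>" "\<rho> \<ge> 0" shows "circumradius A \<le> \<rho>"
  unfolding circumradius_def by (rule cInf_lower) (use assms in \<open>auto intro!: bdd_belowI[where m=0]\<close>)

lemma circ_att:
  fixes A :: "'a::euclidean_space set"
  assumes "compact A" "A \<noteq> {}" shows "\<exists>c. A \<subseteq> cball c (circumradius A)"
proof -
  define S where "S = {\<rho>. \<rho> \<ge> 0 \<and> (\<exists>x. A \<subseteq> cball x \<rho>)}"
  define R where "R = circumradius A"
  have RS: "R = Inf S" unfolding R_def S_def circumradius_def ..
  have Sne: "S \<noteq> {}" using compact_imp_bounded[OF assms(1)] unfolding bounded_subset_cball S_def by auto
  have "\<exists>x. A \<subseteq> cball x (R + inverse (real (Suc n)))" for n
  proof -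
    have "Inf S < R + inverse (real (Suc n))" using RS by simp
    then obtain \<rho> where "\<rho> \<in> S" "\<rho> < R + inverse (real (Suc n))" using cInf_lessD[OF Sne] by blast
    thus ?thesis unfolding S_def by (auto simp: subset_eq) (meson dual_order.trans less_le_not_le mem_cball)
  qed
  then obtain x where x: "\<And>n. A \<subseteq> cball (x n) (R + inverse (real (Suc n)))" by metis
  obtain a0 where a0: "a0 \<in> A" using assms by auto
  have "x n \<in> cball a0 (R + 1)" for n
  proof -
    have "dist (x n) a0 \<le> R + inverse (real (Suc n))" using subsetD[OF x[of n] a0] by simp
    moreover have "inverse (real (Suc n)) \<le> 1" by (simp add: field_simps)
    ultimately show ?thesis by (simp add: dist_commute)
  qed
  then obtain c r where cr: "strict_mono r" "(x \<circ> r) \<longlonglongrightarrow> c"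
    using seq_compactE[OF compact_imp_seq_compact[OF compact_cball]] by metis
  have "dist c y \<le> R" if y: "y \<in> A" for y
  proof (rule LIMSEQ_le)
    show "(\<lambda>n. dist ((x \<circ> r) n) y) \<longlonglongrightarrow> dist c y" by (intro tendsto_intros cr)
    show "(\<lambda>n. R + inverse (real (Suc n))) \<longlonglongrightarrow> R"
      using tendsto_add[OF tendsto_const LIMSEQ_inverse_real_of_nat, of R] by simp
    show "\<exists>N. \<forall>n\<ge>N. dist ((x \<circ> r) n) y \<le> R + inverse (real (Suc n))"
    proof (intro exI allI impI)
      fix n
      have "dist ((x \<circ> r) n) y \<le> R + inverse (real (Suc (r n)))" using x[of "r n"] y by auto
      also have "\<dots> \<le> R + inverse (real (Suc n))"
        using seq_suble[OF cr(1), of n] by (simp add: field_simps)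
      finally show "dist ((x \<circ> r) n) y \<le> R + inverse (real (Suc n))" .
    qed
  qed
  thus ?thesis unfolding R_def by (metis mem_cball subsetI)
qed

lemma w_le:
  fixes A :: "'a::euclidean_space set"
  assumes "compact A" "A \<noteq> {}" "norm u = 1"
  shows "width A \<le> (SUP x\<in>A. u \<bullet> x) - (INF x\<in>A. u \<bullet> x)"
proof -
  have nn: "0 \<le> (SUP x\<in>A. v \<bullet> x) - (INF x\<in>A. v \<bullet> x)" for v
  proof -
    obtain a where "a \<in> A" using assms by auto
    thus ?thesis using hs_upper[OF assms(1), of a v] hi_lower[OF assms(1), of a v] by simp
  qed
  show ?thesis unfolding width_def
    by (rule cInf_lower) (use assms nn in \<open>auto intro!: bdd_belowI[where m=0]\<close>)
qed

lemma w_ge: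
  fixes A :: "'a::euclidean_space set"
  assumes "\<And>u. norm u = 1 \<Longrightarrow> M \<le> (SUP x\<in>A. u \<bullet> x) - (INF x\<in>A. u \<bullet> x)"
  shows "M \<le> width A"
  unfolding width_def by (rule cInf_greatest) (use assms unit_ex in auto)



lemma e_mono: "strict_mono (r::nat\<Rightarrow>nat) \<Longrightarrow> inverse (real (Suc (r n))) \<le> inverse (real (Suc n))"
  using seq_suble[of r n] by (simp add: field_simps)

lemma maxdir:
  fixes A :: "'a::euclidean_space set"
  assumes A: "compact A" "convex A" "A \<noteq> {}" and cb: "cball c r \<subseteq> A" and rr: "r = inradius A"
  shows "\<exists>u. norm u = 1 \<and> v \<bullet> u \<le> 0 \<and> (SUP y\<in>A. u \<bullet> y) \<le> c \<bullet> u + r"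
proof -
  have r0: "r \<ge> 0" using in_ge0[OF A(1,3)] rr by simp
  define e where "e n = inverse (real (Suc n))" for n
  have epos: "e n > 0" for n unfolding e_def by simp
  have lb: "c \<bullet> u + r \<le> (SUP y\<in>A. u \<bullet> y)" if "norm u = 1" for u
  proof -
    have "c + r *\<^sub>R u \<in> A" using cb that r0 by (auto simp: dist_norm)
    from hs_upper[OF A(1) this, of u] that show ?thesis
      by (simp add: inner_add_right inner_commute power2_norm_eq_inner[symmetric])
  qed
  have "\<exists>u. norm u = 1 \<and> v \<bullet> u < e n \<and> (SUP y\<in>A. u \<bullet> y) - c \<bullet> u - r < e n * (e n + norm v)" for n
  proof (rule ccontr)
    assume neg: "\<not> ?thesis"
    have "cball (c - e n *\<^sub>R v) (r + e n * e n) \<subseteq> A"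
    proof (rule ball_crit[OF A])
      fix u :: 'a assume nu: "norm u = 1"
      have cs: "v \<bullet> u \<ge> - norm v"
        using norm_cauchy_schwarz[of "-v" u] nu by simp
      have "e n \<le> v \<bullet> u \<or> e n * (e n + norm v) \<le> (SUP y\<in>A. u \<bullet> y) - c \<bullet> u - r"
      proof -
        have "\<not> (v \<bullet> u < e n \<and> (SUP y\<in>A. u \<bullet> y) - c \<bullet> u - r < e n * (e n + norm v))"
          using neg nu by blast
        thus ?thesis by (simp add: not_less)
      qed
      thus "u \<bullet> (c - e n *\<^sub>R v) + (r + e n * e n) \<le> (SUP y\<in>A. u \<bullet> y)"
      proof
        assume h: "e n \<le> v \<bullet> u"
        have "e n * e n \<le> e n * (v \<bullet> u)" using h epos[of n] by (simp add: mult_left_mono)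
        thus ?thesis using lb[OF nu] by (simp add: inner_diff_right inner_commute)
      next
        assume h: "e n * (e n + norm v) \<le> (SUP y\<in>A. u \<bullet> y) - c \<bullet> u - r"
        have "e n * (- norm v) \<le> e n * (v \<bullet> u)" using cs epos[of n]
          by (intro mult_left_mono) auto
        hence "- (e n * (v \<bullet> u)) \<le> e n * norm v" by simp
        thus ?thesis using h by (simp add: inner_diff_right inner_commute algebra_simps)
      qed
    qed
    hence "r + e n * e n \<le> inradius A" using in_le[OF A(1)] r0 epos[of n] by force
    thus False using rr mult_pos_pos[OF epos[of n] epos[of n]] by simp
  qed
  then obtain u where u: "\<And>n. norm (u n) = 1" "\<And>n. v \<bullet> u n < e n"
    "\<And>n. (SUP y\<in>A. u n \<bullet> y) - c \<bullet> u n - r < e n * (e n + norm v)" by metis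
  have "u n \<in> sphere 0 1" for n using u(1) by simp
  then obtain w s where ws: "w \<in> sphere 0 1" "strict_mono s" "(u \<circ> s) \<longlonglongrightarrow> w"
    using seq_compactE[OF compact_imp_seq_compact[OF compact_sphere]] by metis
  have em: "e (s n) \<le> e n" for n unfolding e_def by (rule e_mono[OF ws(2)])
  have e0: "e \<longlonglongrightarrow> 0" unfolding e_def by (rule LIMSEQ_inverse_real_of_nat)
  have "v \<bullet> w \<le> 0"
  proof (rule LIMSEQ_le)
    show "(\<lambda>n. v \<bullet> (u \<circ> s) n) \<longlonglongrightarrow> v \<bullet> w" by (intro tendsto_intros ws)
    show "e \<longlonglongrightarrow> 0" by (rule e0)
    show "\<exists>N. \<forall>n\<ge>N. v \<bullet> (u \<circ> s) n \<le> e n"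
    proof (intro exI allI impI)
      fix n
      show "v \<bullet> (u \<circ> s) n \<le> e n" using u(2)[of "s n"] em[of n] by simp
    qed
  qed
  moreover have "(SUP y\<in>A. w \<bullet> y) \<le> c \<bullet> w + r"
  proof (rule hs_least[OF A(3)])
    fix y assume y: "y \<in> A"
    have "w \<bullet> y - c \<bullet> w - r \<le> 0"
    proof (rule LIMSEQ_le)
      show "(\<lambda>n. (u \<circ> s) n \<bullet> y - c \<bullet> (u \<circ> s) n - r) \<longlonglongrightarrow> w \<bullet> y - c \<bullet> w - r"
        by (intro tendsto_intros ws)
      show "(\<lambda>n. e n * (e n + norm v)) \<longlonglongrightarrow> 0"
        using tendsto_mult[OF e0 tendsto_add[OF e0 tendsto_const[of "norm v"]]] by simp
      show "\<exists>N. \<forall>n\<ge>N. (u \<circ> s) n \<bullet> y - c \<bullet> (u \<circ> s) n - r \<le> e n * (e n + norm v)"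
      proof (intro exI allI impI)
        fix n
        have "(u \<circ> s) n \<bullet> y - c \<bullet> (u \<circ> s) n - r \<le> (SUP y\<in>A. u (s n) \<bullet> y) - c \<bullet> u (s n) - r"
          using hs_upper[OF A(1) y] by simp
        also have "\<dots> \<le> e (s n) * (e (s n) + norm v)" using u(3)[of "s n"] by simp
        also have "\<dots> \<le> e n * (e n + norm v)"
          using em[of n] epos[of "s n"] by (intro mult_mono add_mono) auto
        finally show "(u \<circ> s) n \<bullet> y - c \<bullet> (u \<circ> s) n - r \<le> e n * (e n + norm v)" .
      qed
    qed
    thus "w \<bullet> y \<le> c \<bullet> w + r" by (simp add: inner_commute)
  qed
  ultimately show ?thesis using ws(1) by (intro exI[of _ w]) simp
qed



lemma mink_props:
  fixes K C :: "'a::euclidean_space set"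
  assumes K: "compact K" "convex K" "K \<noteq> {}" and C: "compact C" "convex C" "C \<noteq> {}"
    and KC: "K \<subseteq> C" and l: "0 \<le> l" "l \<le> 1"
  shows "compact (mink_comb l K C)" "convex (mink_comb l K C)" "mink_comb l K C \<noteq> {}"
    "K \<subseteq> mink_comb l K C" "mink_comb l K C \<subseteq> C"
proof -
  have eq: "mink_comb l K C = (\<Union>x\<in> (\<lambda>x. l *\<^sub>R x) ` K. \<Union>y \<in> (\<lambda>x. (1-l) *\<^sub>R x) ` C. {x + y})"
    unfolding mink_comb_def by auto
  show "compact (mink_comb l K C)" unfolding eq
    by (intro compact_sums' compact_scaling K C)
  show "convex (mink_comb l K C)" unfolding eq
    by (intro convex_sums convex_scaling K C)
  show "K \<subseteq> mink_comb l K C"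
  proof
    fix a assume a: "a \<in> K"
    have "a = l *\<^sub>R a + (1 - l) *\<^sub>R a" by (simp add: algebra_simps)
    thus "a \<in> mink_comb l K C" unfolding mink_comb_def using a KC by blast
  qed
  thus "mink_comb l K C \<noteq> {}" using K by auto
  show "mink_comb l K C \<subseteq> C"
  proof
    fix p assume "p \<in> mink_comb l K C"
    then obtain a b where ab: "p = l *\<^sub>R a + (1 - l) *\<^sub>R b" "a \<in> K" "b \<in> C" unfolding mink_comb_def by auto
    show "p \<in> C" unfolding ab(1) using convexD[OF C(2), of a b l "1-l"] ab KC l by auto
  qed
qed

lemma mink_hs:
  fixes K C :: "'a::euclidean_space set"
  assumes K: "compact K" "K \<noteq> {}" and C: "compact C" "C \<noteq> {}" and cL: "compact (mink_comb l K C)"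
    and l: "0 \<le> l" "l \<le> 1"
  shows "(SUP x\<in>mink_comb l K C. u \<bullet> x) = l * (SUP x\<in>K. u \<bullet> x) + (1 - l) * (SUP x\<in>C. u \<bullet> x)"
proof (rule antisym)
  show "(SUP x\<in>mink_comb l K C. u \<bullet> x) \<le> l * (SUP x\<in>K. u \<bullet> x) + (1 - l) * (SUP x\<in>C. u \<bullet> x)"
  proof (rule hs_least)
    show "mink_comb l K C \<noteq> {}" using K C unfolding mink_comb_def by auto
    fix y assume "y \<in> mink_comb l K C"
    then obtain a b where ab: "y = l *\<^sub>R a + (1 - l) *\<^sub>R b" "a \<in> K" "b \<in> C" unfolding mink_comb_def by auto
    have "l * (u \<bullet> a) \<le> l * (SUP x\<in>K. u \<bullet> x)" using hs_upper[OF K(1) ab(2)] l by (intro mult_left_mono) auto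
    moreover have "(1-l) * (u \<bullet> b) \<le> (1-l) * (SUP x\<in>C. u \<bullet> x)" using hs_upper[OF C(1) ab(3)] l by (intro mult_left_mono) auto
    ultimately show "u \<bullet> y \<le> l * (SUP x\<in>K. u \<bullet> x) + (1 - l) * (SUP x\<in>C. u \<bullet> x)"
      unfolding ab(1) by (simp add: inner_add_right)
  qed
next
  obtain a where a: "a \<in> K" "(SUP x\<in>K. u \<bullet> x) = u \<bullet> a" using hs_att[OF K] by blast
  obtain b where b: "b \<in> C" "(SUP x\<in>C. u \<bullet> x) = u \<bullet> b" using hs_att[OF C] by blast
  have "l *\<^sub>R a + (1 - l) *\<^sub>R b \<in> mink_comb l K C" unfolding mink_comb_def using a b by blast
  from hs_upper[OF cL this, of u] a b
  show "l * (SUP x\<in>K. u \<bullet> x) + (1 - l) * (SUP x\<in>C. u \<bullet> x) \<le> (SUP x\<in>mink_comb l K C. u \<bullet> x)"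
    by (simp add: inner_add_right)
qed

lemma mink_hi:
  fixes K C :: "'a::euclidean_space set"
  assumes K: "compact K" "K \<noteq> {}" and C: "compact C" "C \<noteq> {}" and cL: "compact (mink_comb l K C)"
    and l: "0 \<le> l" "l \<le> 1"
  shows "(INF x\<in>mink_comb l K C. u \<bullet> x) = l * (INF x\<in>K. u \<bullet> x) + (1 - l) * (INF x\<in>C. u \<bullet> x)"
proof (rule antisym)
  show "l * (INF x\<in>K. u \<bullet> x) + (1 - l) * (INF x\<in>C. u \<bullet> x) \<le> (INF x\<in>mink_comb l K C. u \<bullet> x)"
  proof (rule hi_greatest)
    show "mink_comb l K C \<noteq> {}" using K C unfolding mink_comb_def by auto
    fix y assume "y \<in> mink_comb l K C"
    then obtain a b where ab: "y = l *\<^sub>R a + (1 - l) *\<^sub>R b" "a \<in> K" "b \<in> C" unfolding mink_comb_def by auto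
    have "l * (INF x\<in>K. u \<bullet> x) \<le> l * (u \<bullet> a)" using hi_lower[OF K(1) ab(2)] l by (intro mult_left_mono) auto
    moreover have "(1-l) * (INF x\<in>C. u \<bullet> x) \<le> (1-l) * (u \<bullet> b)" using hi_lower[OF C(1) ab(3)] l by (intro mult_left_mono) auto
    ultimately show "l * (INF x\<in>K. u \<bullet> x) + (1 - l) * (INF x\<in>C. u \<bullet> x) \<le> u \<bullet> y"
      unfolding ab(1) by (simp add: inner_add_right)
  qed
next
  obtain a where a: "a \<in> K" "(INF x\<in>K. u \<bullet> x) = u \<bullet> a" using hi_att[OF K] by blast
  obtain b where b: "b \<in> C" "(INF x\<in>C. u \<bullet> x) = u \<bullet> b" using hi_att[OF C] by blast
  have "l *\<^sub>R a + (1 - l) *\<^sub>R b \<in> mink_comb l K C" unfolding mink_comb_def using a b by blast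
  from hi_lower[OF cL this, of u] a b
  show "(INF x\<in>mink_comb l K C. u \<bullet> x) \<le> l * (INF x\<in>K. u \<bullet> x) + (1 - l) * (INF x\<in>C. u \<bullet> x)"
    by (simp add: inner_add_right)
qed

lemma cs_unit:
  fixes u x :: "'a::euclidean_space"
  assumes "norm u = 1" shows "u \<bullet> x \<le> norm x"
  using norm_cauchy_schwarz[of u x] assms by simp

lemma ball_hs:
  fixes A :: "'a::euclidean_space set"
  assumes "compact A" "A \<subseteq> cball c R" "norm u = 1" and Ane: "A \<noteq> {}"
  shows "(SUP x\<in>A. u \<bullet> x) - c \<bullet> u \<le> R" "c \<bullet> u - (INF x\<in>A. u \<bullet> x) \<le> R"
proof -
  obtain a where a: "a \<in> A" "(SUP x\<in>A. u \<bullet> x) = u \<bullet> a" using hs_att[OF assms(1) Ane] by blast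
  have "u \<bullet> (a - c) \<le> norm (a - c)" by (rule cs_unit[OF assms(3)])
  also have "\<dots> \<le> R" using a assms(2) by (auto simp: dist_norm norm_minus_commute)
  finally show "(SUP x\<in>A. u \<bullet> x) - c \<bullet> u \<le> R" using a by (simp add: inner_diff_right inner_commute)
  obtain b where b: "b \<in> A" "(INF x\<in>A. u \<bullet> x) = u \<bullet> b" using hi_att[OF assms(1) Ane] by blast
  have "u \<bullet> (c - b) \<le> norm (c - b)" by (rule cs_unit[OF assms(3)])
  also have "\<dots> \<le> R" using b assms(2) by (auto simp: dist_norm)
  finally show "c \<bullet> u - (INF x\<in>A. u \<bullet> x) \<le> R" using b by (simp add: inner_diff_right inner_commute)
qed

lemma breadth_diam:
  fixes A :: "'a::euclidean_space set"
  assumes "compact A" "A \<noteq> {}" "norm u = 1"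
  shows "(SUP x\<in>A. u \<bullet> x) - (INF x\<in>A. u \<bullet> x) \<le> diameter A"
proof -
  obtain a where a: "a \<in> A" "(SUP x\<in>A. u \<bullet> x) = u \<bullet> a" using hs_att[OF assms(1,2)] by blast
  obtain b where b: "b \<in> A" "(INF x\<in>A. u \<bullet> x) = u \<bullet> b" using hi_att[OF assms(1,2)] by blast
  have "u \<bullet> (a - b) \<le> norm (a - b)" by (rule cs_unit[OF assms(3)])
  also have "\<dots> \<le> diameter A" using diameter_bounded_bound[OF compact_imp_bounded[OF assms(1)] a(1) b(1)]
    by (simp add: dist_norm)
  finally show ?thesis using a b by (simp add: inner_diff_right)
qed



theorem lemma2p3:
  fixes K C :: "'a::euclidean_space set" and l :: real
  assumes "convex_body K" and "circumradius K > 0"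
    and "width K = inradius K + circumradius K"
    and "scott_completion K C"
    and "0 \<le> l" and "l \<le> 1"
  shows "fmap (mink_comb l K C) = l *\<^sub>R fmap K + (1 - l) *\<^sub>R fmap C
    \<and> width (mink_comb l K C) = inradius (mink_comb l K C) + circumradius (mink_comb l K C)"
proof -
  note l = assms(5,6)
  have K: "compact K" "convex K" "K \<noteq> {}" using assms(1) unfolding convex_body_def by auto
  have C: "compact C" "convex C" "C \<noteq> {}" and KC: "K \<subseteq> C" and dKC: "diameter K = diameter C"
    and dw: "diameter C = width C" and RCK: "circumradius C = circumradius K"
    using assms(4) unfolding scott_completion_def convex_body_def by auto
  define L where "L = mink_comb l K C"
  define R where "R = circumradius K"
  define D where "D = diameter C"
  define rK where "rK = inradius K"
  define rC where "rC = inradius C"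
  define wK where "wK = width K"
  have R0: "R > 0" using assms(2) R_def by simp
  have wKr: "wK = rK + R" using assms(3) unfolding wK_def rK_def R_def .
  have L: "compact L" "convex L" "L \<noteq> {}" "K \<subseteq> L" "L \<subseteq> C"
    using mink_props[OF K C KC l] unfolding L_def by auto
  have hsL: "(SUP x\<in>L. u \<bullet> x) = l * (SUP x\<in>K. u \<bullet> x) + (1 - l) * (SUP x\<in>C. u \<bullet> x)" for u
    unfolding L_def by (rule mink_hs[OF K(1,3) C(1,3) L(1)[unfolded L_def] l])
  have hiL: "(INF x\<in>L. u \<bullet> x) = l * (INF x\<in>K. u \<bullet> x) + (1 - l) * (INF x\<in>C. u \<bullet> x)" for u
    unfolding L_def by (rule mink_hi[OF K(1,3) C(1,3) L(1)[unfolded L_def] l])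
  obtain c where cC: "C \<subseteq> cball c R" using circ_att[OF C(1,3)] RCK R_def by auto
  have cK: "K \<subseteq> cball c R" using cC KC by auto
  have rK0: "rK \<ge> 0" unfolding rK_def by (rule in_ge0[OF K(1,3)])
  have rC0: "rC \<ge> 0" unfolding rC_def by (rule in_ge0[OF C(1,3)])
  have ballK: "cball c rK \<subseteq> K"
  proof (rule ball_crit[OF K])
    fix u :: 'a assume nu: "norm u = 1"
    have "wK \<le> (SUP x\<in>K. u \<bullet> x) - (INF x\<in>K. u \<bullet> x)" unfolding wK_def by (rule w_le[OF K(1,3) nu])
    moreover have "c \<bullet> u - (INF x\<in>K. u \<bullet> x) \<le> R" by (rule ball_hs(2)[OF K(1) cK nu K(3)])
    ultimately show "u \<bullet> c + rK \<le> (SUP x\<in>K. u \<bullet> x)" using wKr by (simp add: inner_commute)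
  qed
  have ballC: "cball c (D - R) \<subseteq> C"
  proof (rule ball_crit[OF C])
    fix u :: 'a assume nu: "norm u = 1"
    have "D \<le> (SUP x\<in>C. u \<bullet> x) - (INF x\<in>C. u \<bullet> x)" unfolding D_def dw by (rule w_le[OF C(1,3) nu])
    moreover have "c \<bullet> u - (INF x\<in>C. u \<bullet> x) \<le> R" by (rule ball_hs(2)[OF C(1) cC nu C(3)])
    ultimately show "u \<bullet> c + (D - R) \<le> (SUP x\<in>C. u \<bullet> x)" by (simp add: inner_commute)
  qed
  have rCle: "rC \<le> D - R" unfolding rC_def
  proof (rule in_least[OF C(3)])
    fix x and \<rho> :: real assume \<rho>: "\<rho> \<ge> 0" "cball x \<rho> \<subseteq> C"
    obtain e :: 'a where e: "norm e = 1" using unit_ex by blast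
    have pt: "norm (p - x) + \<rho> \<le> D" if p: "p \<in> C" for p
    proof -
      define u where "u = (if p = x then e else (1 / norm (p - x)) *\<^sub>R (p - x))"
      have nu: "norm u = 1" using e by (simp add: u_def)
      have px: "p - x = norm (p - x) *\<^sub>R u" by (simp add: u_def)
      have "x - \<rho> *\<^sub>R u \<in> C" using \<rho> nu by (auto simp: dist_norm)
      hence "dist p (x - \<rho> *\<^sub>R u) \<le> D"
        unfolding D_def using diameter_bounded_bound[OF compact_imp_bounded[OF C(1)] p] by blast
      moreover have "p - (x - \<rho> *\<^sub>R u) = (norm (p - x) + \<rho>) *\<^sub>R u"
        using px by (simp add: algebra_simps)
      hence "dist p (x - \<rho> *\<^sub>R u) = norm (p - x) + \<rho>" using nu \<rho>(1) by (simp add: dist_norm)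
      ultimately show ?thesis by simp
    qed
    have "C \<subseteq> cball x (D - \<rho>)"
    proof
      fix p assume "p \<in> C" from pt[OF this] show "p \<in> cball x (D - \<rho>)" by (simp add: dist_norm norm_minus_commute)
    qed
    moreover have "x \<in> C" using \<rho> by auto
    hence "D - \<rho> \<ge> 0" using pt[of x] by auto
    ultimately have "circumradius C \<le> D - \<rho>" by (rule circ_le)
    thus "\<rho> \<le> D - R" using RCK R_def by simp
  qed
  have DR: "D - R \<ge> 0" using rCle rC0 by simp
  have rCeq: "rC = D - R" using rCle in_le[OF C(1) ballC DR] rC_def by simp
  have hsK_lb: "c \<bullet> u + rK \<le> (SUP x\<in>K. u \<bullet> x)" if nu: "norm u = 1" for u
  proof -
    have "c + rK *\<^sub>R u \<in> K" using ballK rK0 nu by (auto simp: dist_norm)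
    from hs_upper[OF K(1) this, of u] nu show ?thesis
      by (simp add: inner_add_right inner_commute power2_norm_eq_inner[symmetric])
  qed
  have hsC_lb: "c \<bullet> u + rC \<le> (SUP x\<in>C. u \<bullet> x)" if nu: "norm u = 1" for u
  proof -
    have "c + rC *\<^sub>R u \<in> C" using ballC rC0 nu rCeq by (auto simp: dist_norm)
    from hs_upper[OF C(1) this, of u] nu show ?thesis
      by (simp add: inner_add_right inner_commute power2_norm_eq_inner[symmetric])
  qed
  define s where "s = l * rK + (1 - l) * rC"
  have s0: "s \<ge> 0" unfolding s_def using rK0 rC0 l by simp
  have rL: "inradius L = s"
  proof (rule antisym)
    show "inradius L \<le> s"
    proof (rule in_least[OF L(3)])
      fix x and \<rho> :: real assume \<rho>: "\<rho> \<ge> 0" "cball x \<rho> \<subseteq> L"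
      obtain u where u: "norm u = 1" "(c - x) \<bullet> u \<le> 0" "(SUP y\<in>K. u \<bullet> y) \<le> c \<bullet> u + rK"
        using maxdir[OF K ballK rK_def, of "c - x"] by blast
      have "wK \<le> (SUP x\<in>K. u \<bullet> x) - (INF x\<in>K. u \<bullet> x)" unfolding wK_def by (rule w_le[OF K(1,3) u(1)])
      hence hiK: "(INF x\<in>K. u \<bullet> x) \<le> c \<bullet> u - R" using u(3) wKr by simp
      obtain a where a: "a \<in> K" "(INF x\<in>K. u \<bullet> x) = u \<bullet> a" using hi_att[OF K(1,3)] by blast
      have "(INF x\<in>C. u \<bullet> x) \<le> (INF x\<in>K. u \<bullet> x)" using hi_lower[OF C(1)] a KC by auto
      moreover have "(SUP x\<in>C. u \<bullet> x) - (INF x\<in>C. u \<bullet> x) \<le> D"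
        unfolding D_def by (rule breadth_diam[OF C(1,3) u(1)])
      ultimately have hsC: "(SUP x\<in>C. u \<bullet> x) \<le> c \<bullet> u + rC" using hiK rCeq by simp
      have "x + \<rho> *\<^sub>R u \<in> L" using \<rho> u(1) by (auto simp: dist_norm)
      from hs_upper[OF L(1) this, of u]
      have "u \<bullet> x + \<rho> \<le> l * (SUP x\<in>K. u \<bullet> x) + (1 - l) * (SUP x\<in>C. u \<bullet> x)"
        using u(1) hsL by (simp add: inner_add_right power2_norm_eq_inner[symmetric])
      also have "\<dots> \<le> l * (c \<bullet> u + rK) + (1 - l) * (c \<bullet> u + rC)"
        using u(3) hsC l by (intro add_mono mult_left_mono) auto
      also have "\<dots> = c \<bullet> u + s" unfolding s_def by (simp add: algebra_simps)
      finally have "u \<bullet> x + \<rho> \<le> c \<bullet> u + s" .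
      moreover have "(c - x) \<bullet> u = c \<bullet> u - u \<bullet> x" by (metis inner_commute inner_diff_left)
      ultimately show "\<rho> \<le> s" using u(2) by linarith
    qed
    have "cball c s \<subseteq> L"
    proof (rule ball_crit[OF L(1-3)])
      fix u :: 'a assume nu: "norm u = 1"
      have "l * (c \<bullet> u + rK) + (1 - l) * (c \<bullet> u + rC) \<le> l * (SUP x\<in>K. u \<bullet> x) + (1 - l) * (SUP x\<in>C. u \<bullet> x)"
        using hsK_lb[OF nu] hsC_lb[OF nu] l by (intro add_mono mult_left_mono) auto
      thus "u \<bullet> c + s \<le> (SUP y\<in>L. u \<bullet> y)" unfolding hsL s_def by (simp add: algebra_simps inner_commute)
    qed
    thus "s \<le> inradius L" by (rule in_le[OF L(1) _ s0])
  qed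
  have wL: "width L = l * wK + (1 - l) * D"
  proof (rule antisym)
    show "l * wK + (1 - l) * D \<le> width L"
    proof (rule w_ge)
      fix u :: 'a assume nu: "norm u = 1"
      have "wK \<le> (SUP x\<in>K. u \<bullet> x) - (INF x\<in>K. u \<bullet> x)" unfolding wK_def by (rule w_le[OF K(1,3) nu])
      moreover have "D \<le> (SUP x\<in>C. u \<bullet> x) - (INF x\<in>C. u \<bullet> x)" unfolding D_def dw by (rule w_le[OF C(1,3) nu])
      ultimately have "l * wK + (1 - l) * D \<le> l * ((SUP x\<in>K. u \<bullet> x) - (INF x\<in>K. u \<bullet> x)) + (1 - l) * ((SUP x\<in>C. u \<bullet> x) - (INF x\<in>C. u \<bullet> x))"
        using l by (intro add_mono mult_left_mono) auto
      thus "l * wK + (1 - l) * D \<le> (SUP x\<in>L. u \<bullet> x) - (INF x\<in>L. u \<bullet> x)"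
        unfolding hsL hiL by (simp add: algebra_simps)
    qed
    show "width L \<le> l * wK + (1 - l) * D"
    proof (rule field_le_epsilon)
      fix \<epsilon> :: real assume \<epsilon>: "\<epsilon> > 0"
      define S where "S = {(SUP x\<in>K. u \<bullet> x) - (INF x\<in>K. u \<bullet> x) | u::'a. norm u = 1}"
      have "Inf S < wK + \<epsilon>" unfolding S_def wK_def width_def using \<epsilon> by simp
      moreover have "S \<noteq> {}" unfolding S_def using unit_ex by blast
      ultimately obtain t where "t \<in> S" "t < wK + \<epsilon>" using cInf_lessD by blast
      then obtain u :: 'a where u: "norm u = 1" "(SUP x\<in>K. u \<bullet> x) - (INF x\<in>K. u \<bullet> x) < wK + \<epsilon>"
        unfolding S_def by blast
      have "(SUP x\<in>C. u \<bullet> x) - (INF x\<in>C. u \<bullet> x) \<le> D"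
        unfolding D_def by (rule breadth_diam[OF C(1,3) u(1)])
      have "width L \<le> (SUP x\<in>L. u \<bullet> x) - (INF x\<in>L. u \<bullet> x)" by (rule w_le[OF L(1,3) u(1)])
      also have "\<dots> = l * ((SUP x\<in>K. u \<bullet> x) - (INF x\<in>K. u \<bullet> x)) + (1 - l) * ((SUP x\<in>C. u \<bullet> x) - (INF x\<in>C. u \<bullet> x))"
        unfolding hsL hiL by (simp add: algebra_simps)
      also have "\<dots> \<le> l * (wK + \<epsilon>) + (1 - l) * D"
        using u(2) \<open>(SUP x\<in>C. u \<bullet> x) - (INF x\<in>C. u \<bullet> x) \<le> D\<close> l by (intro add_mono mult_left_mono) auto
      also have "\<dots> \<le> l * wK + (1 - l) * D + \<epsilon>" using l \<epsilon> by (simp add: algebra_simps mult_left_le_one_le)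
      finally show "width L \<le> l * wK + (1 - l) * D + \<epsilon>" .
    qed
  qed
  have RL: "circumradius L = R"
  proof (rule antisym)
    show "circumradius L \<le> R" using L(5) cC R0 by (intro circ_le) auto
    obtain cL where cL: "L \<subseteq> cball cL (circumradius L)" using circ_att[OF L(1,3)] by blast
    obtain p where "p \<in> L" using L(3) by auto
    hence "circumradius L \<ge> 0" using cL by (meson dist_not_less_zero less_le_not_le linorder_le_less_linear mem_cball subsetD order_trans)
    thus "R \<le> circumradius L" unfolding R_def using cL L(4) by (intro circ_le) auto
  qed
  have DL: "diameter L = D"
  proof (rule antisym)
    show "diameter L \<le> D" unfolding D_def by (rule diameter_subset[OF L(5) compact_imp_bounded[OF C(1)]])
    show "D \<le> diameter L" unfolding D_def dKC[symmetric]
      by (rule diameter_subset[OF L(4) compact_imp_bounded[OF L(1)]])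
  qed
  have eq2: "width L = inradius L + circumradius L"
    unfolding wL rL RL s_def wKr rCeq by (simp add: algebra_simps)
  have eq1: "fmap L = l *\<^sub>R fmap K + (1 - l) *\<^sub>R fmap C"
    unfolding fmap_def using R0
    by (simp add: rL wL RL DL RCK dKC dw[symmetric] s_def rCeq[symmetric] wKr[symmetric]
        rK_def[symmetric] rC_def[symmetric] wK_def[symmetric] R_def[symmetric] D_def[symmetric]
        add_divide_distrib diff_divide_distrib) (simp add: field_simps)
  show ?thesis using eq1 eq2 unfolding L_def by simp
qed


end
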